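(* Let $n\ge 2$ and let $\mathcal{D}\subseteq\mathcal{M}_{d\times d}(\mathbb{C})$ be the algebra of diagonal matrices. If $\mathcal{A}$ is a maximal subalgebra of $\mathcal{T}_{n,d}(\mathcal{D})$ (an algebra contained in $\mathcal{T}_{n,d}(\mathcal{D})$ not properly contained in any other algebra contained in $\mathcal{T}_{n,d}(\mathcal{D})$), then $\mathcal{A}=\mathcal{F}_{A,B}^{\mathcal{D}}$ for some $A,B\in\mathcal{D}$.
   Context: For positive integers $n,d$, $\mathcal{T}_{n,d}$ denotes the set of block Toeplitz matrices $\mathbf{T}=(T_{p-q})_{p,q=0}^{n-1}$: $nd\times nd$ complex matrices partitioned into $n\times n$ blocks of size $d\times d$, whose $(p,q)$ block is $T_{p-q}$ for some $T_{-(n-1)},\dots,T_{n-1}\in\mathcal{M}_{d\times d}(\mathbb{C})$. For a subalgebra $\mathcal{B}\subseteq\mathcal{M}_{d\times d}(\mathbb{C})$, $\mathcal{T}_{n,d}(\mathcal{B})$ is the set of $\mathbf{T}\in\mathcal{T}_{n,d}$ with all $T_j\in\mathcal{B}$. An algebra contained in a set of matrices is a subset that is a linear subspace closed under matrix multiplication. For $A,B\in\mathcal{M}_{d\times d}(\mathbb{C})$, $$\mathcal{F}_{A,B}^{\mathcal{B}}=\{(T_{p-q})_{p,q=0}^{n-1}\in\mathcal{T}_{n,d}(\mathcal{B}) : AT_j=BT_{j-n}\text{ for } j=1,2,\dots,n-1\}.$$ *)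

theory Defs
  imports Complex_Main "Jordan_Normal_Form.Matrix"
begin

text \<open>An nd x nd matrix M
  is block Toeplitz with blocks T(j) (j an integer, -(n-1) <= j <= n-1, each d x d) if
  its (p,q) block is T(p-q), i.e. entry (i,k) equals entry (i mod d, k mod d) of
  T(i div d - k div d).\<close>

definition block_toeplitz_with :: "nat \<Rightarrow> nat \<Rightarrow> (int \<Rightarrow> complex mat) \<Rightarrow> complex mat \<Rightarrow> bool" where
  "block_toeplitz_with n d T M \<longleftrightarrow>
     M \<in> carrier_mat (n*d) (n*d) \<and>
     (\<forall>j. - (int n - 1) \<le> j \<and> j \<le> int n - 1 \<longrightarrow> T j \<in> carrier_mat d d) \<and>
     (\<forall>i < n*d. \<forall>k < n*d. M $$ (i,k) = T (int (i div d) - int (k div d)) $$ (i mod d, k mod d))"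

definition toeplitz_set :: "nat \<Rightarrow> nat \<Rightarrow> complex mat set \<Rightarrow> complex mat set" where
  "toeplitz_set n d \<B> = {M. \<exists>T. block_toeplitz_with n d T M \<and>
       (\<forall>j. - (int n - 1) \<le> j \<and> j \<le> int n - 1 \<longrightarrow> T j \<in> \<B>)}"

definition diag_alg :: "nat \<Rightarrow> complex mat set" where
  "diag_alg d = {A \<in> carrier_mat d d. diagonal_mat A}"

definition algebra_in :: "nat \<Rightarrow> complex mat set \<Rightarrow> complex mat set \<Rightarrow> bool" where
  "algebra_in N S \<A> \<longleftrightarrow> \<A> \<subseteq> S \<and> \<A> \<subseteq> carrier_mat N N \<and> 0\<^sub>m N N \<in> \<A> \<and>
     (\<forall>X\<in>\<A>. \<forall>Y\<in>\<A>. X + Y \<in> \<A>) \<and>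
     (\<forall>c::complex. \<forall>X\<in>\<A>. c \<cdot>\<^sub>m X \<in> \<A>) \<and>
     (\<forall>X\<in>\<A>. \<forall>Y\<in>\<A>. X * Y \<in> \<A>)"

definition maximal_algebra_in :: "nat \<Rightarrow> complex mat set \<Rightarrow> complex mat set \<Rightarrow> bool" where
  "maximal_algebra_in N S \<A> \<longleftrightarrow> algebra_in N S \<A> \<and>
     \<not> (\<exists>\<B>. algebra_in N S \<B> \<and> \<A> \<subset> \<B>)"

definition F_set :: "nat \<Rightarrow> nat \<Rightarrow> complex mat set \<Rightarrow> complex mat \<Rightarrow> complex mat \<Rightarrow> complex mat set" where
  "F_set n d \<B> A B = {M. \<exists>T. block_toeplitz_with n d T M \<and>
       (\<forall>j. - (int n - 1) \<le> j \<and> j \<le> int n - 1 \<longrightarrow> T j \<in> \<B>) \<and>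
       (\<forall>j. 1 \<le> j \<and> j \<le> int n - 1 \<longrightarrow> A * T j = B * T (j - int n))}"

end

theory Submission
  imports Defs
begin

lemma sum_blocks: fixes f :: "nat \<Rightarrow> 'a::comm_monoid_add" shows "(\<Sum>k<n*d. f k) = (\<Sum>r<n. \<Sum>c<d. f (r*d+c))"
proof -
  have "(\<Sum>k<n*d. f k) = (\<Sum>m<n. sum f {m*d..<m*d+d})" using sum.nat_group[of f d n] by simp
  also have "\<dots> = (\<Sum>r<n. \<Sum>c<d. f (r*d+c))"
  proof (rule sum.cong[OF refl])
    fix m
    have "sum f {m*d..<m*d+d} = sum f {0+m*d..<d+m*d}" by (simp add: add.commute)
    also have "\<dots> = (\<Sum>c\<in>{0..<d}. f (c + m*d))" by (rule sum.shift_bounds_nat_ivl)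
    finally show "sum f {m*d..<m*d+d} = (\<Sum>c<d. f (m*d+c))" by (simp add: atLeast0LessThan add.commute)
  qed
  finally show ?thesis .
qed

lemma tele_gen: "(\<Sum>r<n. f (int r - 1)) + f (int n - 1) = f (-1) + (\<Sum>r<n. (f (int r)::'a::comm_monoid_add))"
  by (induction n) (simp_all add: add.assoc add.left_commute)

lemma tele:
  fixes t s :: "int \<Rightarrow> complex"
  shows "(\<Sum>r<n. t (p+1 - int r) * s (int r - (q+1))) + t (p+1-int n) * s (int n - 1 - q)
       = (\<Sum>r<n. t (p - int r) * s (int r - q)) + t (p+1) * s (-1-q)"
proof -
  have "(\<Sum>r<n. (\<lambda>x. t (p - x) * s (x - q)) (int r - 1)) + (\<lambda>x. t (p - x) * s (x - q)) (int n - 1)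
     = (\<lambda>x. t (p - x) * s (x - q)) (-1) + (\<Sum>r<n. (\<lambda>x. t (p - x) * s (x - q)) (int r))"
    by (rule tele_gen)
  then show ?thesis by (simp add: algebra_simps)
qed

lemma shift_inv:
  fixes h :: "nat \<Rightarrow> nat \<Rightarrow> 'a"
  assumes "\<And>p q. p+1<n \<Longrightarrow> q+1<n \<Longrightarrow> h (p+1) (q+1) = h p q"
  shows "p<n \<Longrightarrow> q<n \<Longrightarrow> h p q = (if q \<le> p then h (p-q) 0 else h 0 (q-p))"
proof (induction q arbitrary: p)
  case 0 then show ?case by simp
next
  case (Suc q)
  show ?case
  proof (cases p)
    case 0 then show ?thesis by simp
  next
    case (Suc p')
    have "h p (Suc q) = h p' q" using assms[of p' q] Suc \<open>Suc q < n\<close> \<open>p<n\<close> by simp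
    also have "\<dots> = (if q \<le> p' then h (p'-q) 0 else h 0 (q-p'))" using Suc.IH Suc.prems Suc by simp
    finally show ?thesis using Suc by simp
  qed
qed

lemma choose_ab:
  fixes u v :: "'x \<Rightarrow> 'i \<Rightarrow> complex"
  assumes "\<And>x y i j. x\<in>X \<Longrightarrow> y\<in>X \<Longrightarrow> i\<in>I \<Longrightarrow> j\<in>I \<Longrightarrow> u x i * v y j = v x i * u y j"
  shows "\<exists>a b. (a \<noteq> 0 \<or> b \<noteq> 0) \<and> (\<forall>x\<in>X. \<forall>i\<in>I. a * u x i = b * v x i)"
proof (cases "\<exists>x0\<in>X. \<exists>i0\<in>I. u x0 i0 \<noteq> 0")
  case True
  then obtain x0 i0 where h: "x0\<in>X" "i0\<in>I" "u x0 i0 \<noteq> 0" by blast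
  show ?thesis
  proof (intro exI conjI)
    show "v x0 i0 \<noteq> 0 \<or> u x0 i0 \<noteq> 0" using h by simp
    show "\<forall>x\<in>X. \<forall>i\<in>I. v x0 i0 * u x i = u x0 i0 * v x i"
      using assms h by (metis mult.commute)
  qed
next
  case False
  then show ?thesis by (intro exI[of _ 1] exI[of _ 0]) auto
qed

lemma pairing:
  fixes t s :: "int \<Rightarrow> complex"
  assumes rt: "\<And>j. 1 \<le> j \<Longrightarrow> j \<le> int n - 1 \<Longrightarrow> a * t j = b * t (j - int n)"
    and rs: "\<And>j. 1 \<le> j \<Longrightarrow> j \<le> int n - 1 \<Longrightarrow> a * s j = b * s (j - int n)"
    and p: "1 \<le> p" "p < n"
  shows "a * (\<Sum>k<n. t (int p - int k) * s (int k))
       = b * (\<Sum>k<n. t (- int k) * s (int k + int p - int n))"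
proof -
  have "(\<Sum>k<n. a * (t (int p - int k) * s (int k)))
       = (\<Sum>k<n. b * (t (- int k) * s (int k + int p - int n)))"
  proof (rule sum.reindex_bij_witness[where j="\<lambda>k. if p \<le> k then k - p else k + n - p"
        and i="\<lambda>k. if k + p < n then k + p else k + p - n"])
    fix k assume k: "k \<in> {..<n}"
    show "(if (if p \<le> k then k - p else k + n - p) + p < n then (if p \<le> k then k - p else k + n - p) + p
           else (if p \<le> k then k - p else k + n - p) + p - n) = k" using k p by auto
    show "(if p \<le> k then k - p else k + n - p) \<in> {..<n}" using k p by auto
    show "b * (t (- int (if p \<le> k then k - p else k + n - p)) *
             s (int (if p \<le> k then k - p else k + n - p) + int p - int n))
          = a * (t (int p - int k) * s (int k))"
    proof (cases "k = p")
      case True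
      then show ?thesis using rs[of "int p"] p by (simp add: algebra_simps)
    next
      case False
      show ?thesis
      proof (cases "p < k")
        case True
        then have e: "(if p \<le> k then k - p else k + n - p) = k - p" by simp
        have "a * s (int k) = b * s (int k - int n)" using rs[of "int k"] True k p by simp
        then show ?thesis unfolding e using True by (simp add: of_nat_diff algebra_simps)
      next
        case F2: False
        with False have kp: "k < p" by simp
        then have e: "(if p \<le> k then k - p else k + n - p) = k + n - p" by simp
        have "a * t (int p - int k) = b * t (int p - int k - int n)" using rt[of "int p - int k"] kp k p by simp
        then show ?thesis unfolding e using kp p by (simp add: of_nat_diff algebra_simps)
      qed
    qed
  next
    fix k assume k: "k \<in> {..<n}"
    show "(if (if k + p < n then k + p else k + p - n) \<ge> p then (if k + p < n then k + p else k + p - n) - p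
           else (if k + p < n then k + p else k + p - n) + n - p) = k" using k p by auto
    show "(if k + p < n then k + p else k + p - n) \<in> {..<n}" using k p by auto
  qed
  then show ?thesis by (simp add: sum_distrib_left)
qed


definition ent :: "nat \<Rightarrow> complex mat \<Rightarrow> int \<Rightarrow> nat \<Rightarrow> complex" where
  "ent d M j c = (if 0 \<le> j then M $$ (nat j * d + c, c) else M $$ (c, nat (-j) * d + c))"

lemma lt_nd: "p < n \<Longrightarrow> c < (d::nat) \<Longrightarrow> p*d + c < n*d"
proof -
  assume "p < n" "c < d"
  then have "p*d + c < p*d + d" by simp
  also have "\<dots> = (p+1)*d" by simp
  also have "\<dots> \<le> n*d" using \<open>p<n\<close> by (intro mult_right_mono) auto
  finally show ?thesis .
qed

lemma btw_entry:
  assumes "block_toeplitz_with n d T M" "p<n" "q<n" "c<d" "c'<d"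
  shows "M $$ (p*d+c, q*d+c') = T (int p - int q) $$ (c,c')"
proof -
  have "M $$ (p*d+c, q*d+c') = T (int ((p*d+c) div d) - int ((q*d+c') div d)) $$ ((p*d+c) mod d, (q*d+c') mod d)"
    using assms lt_nd unfolding block_toeplitz_with_def by blast
  then show ?thesis using assms by simp
qed

lemma btw_range: "p < n \<Longrightarrow> q < n \<Longrightarrow> - (int n - 1) \<le> int p - int q \<and> int p - int q \<le> int n - 1"
  by auto

lemma ent_eq:
  assumes "block_toeplitz_with n d T M" "- (int n - 1) \<le> j" "j \<le> int n - 1" "c<d"
  shows "ent d M j c = T j $$ (c,c)"
proof (cases "0 \<le> j")
  case True
  then have "nat j < n" using assms by linarith
  then show ?thesis using btw_entry[OF assms(1), of "nat j" 0 c c] True assms(4) unfolding ent_def by simp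
next
  case False
  then have "nat (-j) < n" using assms by linarith
  then show ?thesis using btw_entry[OF assms(1), of 0 "nat (-j)" c c] False assms(4) unfolding ent_def by simp
qed

lemma diag_zero: "X \<in> diag_alg d \<Longrightarrow> c < d \<Longrightarrow> c' < d \<Longrightarrow> c \<noteq> c' \<Longrightarrow> X $$ (c,c') = 0"
  unfolding diag_alg_def diagonal_mat_def by auto

lemma prod_entry:
  assumes M: "block_toeplitz_with n d T M" and N: "block_toeplitz_with n d S N"
    and TD: "\<And>j. - (int n - 1) \<le> j \<Longrightarrow> j \<le> int n - 1 \<Longrightarrow> T j \<in> diag_alg d"
    and SD: "\<And>j. - (int n - 1) \<le> j \<Longrightarrow> j \<le> int n - 1 \<Longrightarrow> S j \<in> diag_alg d"
    and pq: "p<n" "q<n" "c<d" "c'<d"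
  shows "(M*N) $$ (p*d+c, q*d+c') = (if c = c' then (\<Sum>r<n. T (int p - int r) $$ (c,c) * S (int r - int q) $$ (c,c)) else 0)"
proof -
  have Mc: "M \<in> carrier_mat (n*d) (n*d)" and Nc: "N \<in> carrier_mat (n*d) (n*d)"
    using M N unfolding block_toeplitz_with_def by auto
  have i: "p*d+c < n*d" "q*d+c' < n*d" using lt_nd pq by auto
  have "(M*N) $$ (p*d+c, q*d+c') = (\<Sum>k<n*d. M $$ (p*d+c, k) * N $$ (k, q*d+c'))"
    using Mc Nc i by (simp add: scalar_prod_def atLeast0LessThan)
  also have "\<dots> = (\<Sum>r<n. \<Sum>c''<d. M $$ (p*d+c, r*d+c'') * N $$ (r*d+c'', q*d+c'))"
    by (rule sum_blocks)
  also have "\<dots> = (\<Sum>r<n. T (int p - int r) $$ (c,c) * S (int r - int q) $$ (c,c'))"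
  proof (rule sum.cong[OF refl])
    fix r assume r: "r \<in> {..<n}"
    have "(\<Sum>c''<d. M $$ (p*d+c, r*d+c'') * N $$ (r*d+c'', q*d+c'))
        = (\<Sum>c''<d. T (int p - int r) $$ (c,c'') * S (int r - int q) $$ (c'',c'))"
      using btw_entry[OF M] btw_entry[OF N] r pq by (intro sum.cong) auto
    also have "\<dots> = (\<Sum>c''\<in>{c}. T (int p - int r) $$ (c,c'') * S (int r - int q) $$ (c'',c'))"
    proof (rule sum.mono_neutral_right)
      show "\<forall>i\<in>{..<d} - {c}. T (int p - int r) $$ (c, i) * S (int r - int q) $$ (i, c') = 0"
        using diag_zero[OF TD] r pq btw_range by auto
    qed (use pq in auto)
    finally show "(\<Sum>c''<d. M $$ (p*d+c, r*d+c'') * N $$ (r*d+c'', q*d+c'))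
        = T (int p - int r) $$ (c,c) * S (int r - int q) $$ (c,c')" by simp
  qed
  also have "\<dots> = (if c = c' then (\<Sum>r<n. T (int p - int r) $$ (c,c) * S (int r - int q) $$ (c,c)) else 0)"
    using diag_zero[OF SD] pq btw_range by auto
  finally show ?thesis .
qed


definition dg :: "nat \<Rightarrow> (nat \<Rightarrow> complex) \<Rightarrow> complex mat" where
  "dg d a = mat d d (\<lambda>(r,k). if r = k then a r else 0)"

lemma dg_diag: "dg d a \<in> diag_alg d"
  unfolding dg_def diag_alg_def diagonal_mat_def by auto

lemma dg_mult_entry:
  assumes "X \<in> carrier_mat d d" "r < d" "k < d"
  shows "(dg d a * X) $$ (r,k) = a r * X $$ (r,k)"
proof -
  have "(dg d a * X) $$ (r,k) = (\<Sum>l\<in>{0..<d}. (if r = l then a r else 0) * X $$ (l,k))"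
    using assms by (simp add: dg_def scalar_prod_def)
  also have "\<dots> = (\<Sum>l\<in>{0..<d}. (if r = l then a r * X $$ (l,k) else 0))"
    by (intro sum.cong) auto
  also have "\<dots> = a r * X $$ (r,k)" using assms by simp
  finally show ?thesis .
qed

lemma rel_iff:
  assumes "X \<in> diag_alg d" "Y \<in> diag_alg d"
  shows "dg d a * X = dg d b * Y \<longleftrightarrow> (\<forall>c<d. a c * X $$ (c,c) = b c * Y $$ (c,c))"
proof
  assume h: "dg d a * X = dg d b * Y"
  show "\<forall>c<d. a c * X $$ (c,c) = b c * Y $$ (c,c)"
  proof (intro allI impI)
    fix c assume c: "c < d"
    have "(dg d a * X) $$ (c,c) = (dg d b * Y) $$ (c,c)" using h by simp
    then show "a c * X $$ (c,c) = b c * Y $$ (c,c)"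
      using dg_mult_entry[of X d c c a] dg_mult_entry[of Y d c c b] assms c
      unfolding diag_alg_def by simp
  qed
next
  assume h: "\<forall>c<d. a c * X $$ (c,c) = b c * Y $$ (c,c)"
  have XY: "X \<in> carrier_mat d d" "Y \<in> carrier_mat d d" using assms unfolding diag_alg_def by auto
  show "dg d a * X = dg d b * Y"
  proof (rule eq_matI)
    fix r k assume rk: "r < dim_row (dg d b * Y)" "k < dim_col (dg d b * Y)"
    then have rk': "r < d" "k < d" using XY by (auto simp: dg_def)
    show "(dg d a * X) $$ (r,k) = (dg d b * Y) $$ (r,k)"
    proof (cases "r = k")
      case True then show ?thesis using h rk' XY by (simp add: dg_mult_entry)
    next
      case False then show ?thesis using rk' XY assms by (simp add: dg_mult_entry diag_zero)
    qed
  qed (use XY in \<open>auto simp: dg_def\<close>)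
qed

lemma diag_add: "X \<in> diag_alg d \<Longrightarrow> Y \<in> diag_alg d \<Longrightarrow> X + Y \<in> diag_alg d"
  unfolding diag_alg_def diagonal_mat_def by auto
lemma diag_smult: "X \<in> diag_alg d \<Longrightarrow> x \<cdot>\<^sub>m X \<in> diag_alg d"
  unfolding diag_alg_def diagonal_mat_def by auto
lemma diag_zero_mat: "0\<^sub>m d d \<in> diag_alg d"
  unfolding diag_alg_def diagonal_mat_def by auto

lemma div_range:
  assumes "i < n*d" "k < n*d"
  shows "- (int n - 1) \<le> int (i div d) - int (k div d) \<and> int (i div d) - int (k div d) \<le> int n - 1"
proof -
  have "i div d < n" "k div d < n" using assms less_mult_imp_div_less by auto
  then show ?thesis by auto
qed

lemma mod_lt: "i < n*d \<Longrightarrow> i mod d < (d::nat)"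
  by (cases "d = 0") auto

lemma btw_add:
  assumes "block_toeplitz_with n d T M" "block_toeplitz_with n d S N"
  shows "block_toeplitz_with n d (\<lambda>j. T j + S j) (M + N)"
  unfolding block_toeplitz_with_def
proof (intro conjI allI impI)
  show "M + N \<in> carrier_mat (n * d) (n * d)" using assms unfolding block_toeplitz_with_def by auto
  fix j assume "- (int n - 1) \<le> j \<and> j \<le> int n - 1"
  then show "T j + S j \<in> carrier_mat d d" using assms unfolding block_toeplitz_with_def by auto
next
  fix i k assume ik: "i < n*d" "k < n*d"
  have c: "T (int (i div d) - int (k div d)) \<in> carrier_mat d d" "S (int (i div d) - int (k div d)) \<in> carrier_mat d d"
    using div_range[OF ik] assms unfolding block_toeplitz_with_def by blast+
  show "(M + N) $$ (i, k) = (T (int (i div d) - int (k div d)) + S (int (i div d) - int (k div d))) $$ (i mod d, k mod d)"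
    using assms ik c mod_lt[OF ik(1)] mod_lt[OF ik(2)] unfolding block_toeplitz_with_def by auto
qed

lemma btw_smult:
  assumes "block_toeplitz_with n d T M"
  shows "block_toeplitz_with n d (\<lambda>j. x \<cdot>\<^sub>m T j) (x \<cdot>\<^sub>m M)"
  unfolding block_toeplitz_with_def
proof (intro conjI allI impI)
  show "x \<cdot>\<^sub>m M \<in> carrier_mat (n * d) (n * d)" using assms unfolding block_toeplitz_with_def by auto
  fix j assume "- (int n - 1) \<le> j \<and> j \<le> int n - 1"
  then show "x \<cdot>\<^sub>m T j \<in> carrier_mat d d" using assms unfolding block_toeplitz_with_def by auto
next
  fix i k assume ik: "i < n*d" "k < n*d"
  have c: "T (int (i div d) - int (k div d)) \<in> carrier_mat d d"
    using div_range[OF ik] assms unfolding block_toeplitz_with_def by blast+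
  show "(x \<cdot>\<^sub>m M) $$ (i, k) = (x \<cdot>\<^sub>m T (int (i div d) - int (k div d))) $$ (i mod d, k mod d)"
    using assms ik c mod_lt[OF ik(1)] mod_lt[OF ik(2)] unfolding block_toeplitz_with_def by auto
qed

lemma btw_zero: "block_toeplitz_with n d (\<lambda>j. 0\<^sub>m d d) (0\<^sub>m (n*d) (n*d))"
  unfolding block_toeplitz_with_def using mod_lt by auto


lemma tele_inst:
  fixes t s :: "int \<Rightarrow> complex"
  shows "(\<Sum>r<n. t (int (p+1) - int r) * s (int r - int (q+1))) + t (int p + 1 - int n) * s (int n - 1 - int q)
       = (\<Sum>r<n. t (int p - int r) * s (int r - int q)) + t (int p + 1) * s (-1 - int q)"
  using tele[where t=t and s=s and n=n and p="int p" and q="int q"] by (simp add: add.commute)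

lemma h_shift:
  fixes t s :: "int \<Rightarrow> complex"
  assumes cond: "\<And>i j. 1\<le>i \<Longrightarrow> i \<le> int n - 1 \<Longrightarrow> 1 \<le> j \<Longrightarrow> j \<le> int n - 1 \<Longrightarrow> t i * s (j - int n) = t (i - int n) * s j"
    and pq: "p+1<n" "q+1<n"
  shows "(\<Sum>r<n. t (int (p+1) - int r) * s (int r - int (q+1))) = (\<Sum>r<n. t (int p - int r) * s (int r - int q))"
proof -
  have "t (int p + 1) * s ((int n - 1 - int q) - int n) = t (int p + 1 - int n) * s (int n - 1 - int q)"
    using pq by (intro cond) auto
  moreover have "(int n - 1 - int q) - int n = -1 - int q" by simp
  ultimately show ?thesis using tele_inst[where t=t and s=s and n=n and p=p and q=q] by simp
qed

lemma cond_from_shift: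
  fixes t s :: "int \<Rightarrow> complex"
  assumes sh: "\<And>p q. p+1<n \<Longrightarrow> q+1<n \<Longrightarrow> (\<Sum>r<n. t (int (p+1) - int r) * s (int r - int (q+1))) = (\<Sum>r<n. t (int p - int r) * s (int r - int q))"
    and ij: "1\<le>i" "i \<le> int n - 1" "1 \<le> j" "j \<le> int n - 1"
  shows "t i * s (j - int n) = t (i - int n) * s j"
proof -
  define p where "p = nat i - 1"
  define q where "q = n - 1 - nat j"
  have pq: "p+1 < n" "q+1<n" using ij unfolding p_def q_def by auto
  have e1: "int p + 1 = i" "int q = int n - 1 - j" using ij unfolding p_def q_def by auto
  have "t (int p + 1 - int n) * s (int n - 1 - int q) = t (int p + 1) * s (-1 - int q)"
    using tele_inst[where t=t and s=s and n=n and p=p and q=q] sh[OF pq] by simp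
  moreover have "-1 - int q = j - int n" "int n - 1 - int q = j" using e1 by auto
  ultimately show ?thesis using e1 by simp
qed

lemma cond_from_ab:
  fixes t s :: "int \<Rightarrow> complex"
  assumes ab: "a \<noteq> 0 \<or> b \<noteq> 0"
    and rt: "\<And>j. 1 \<le> j \<Longrightarrow> j \<le> int n - 1 \<Longrightarrow> a * t j = b * t (j - int n)"
    and rs: "\<And>j. 1 \<le> j \<Longrightarrow> j \<le> int n - 1 \<Longrightarrow> a * s j = b * s (j - int n)"
    and ij: "1\<le>i" "i \<le> int n - 1" "1 \<le> j" "j \<le> int n - 1"
  shows "t i * s (j - int n) = t (i - int n) * s j"
proof (cases "a = 0")
  case False
  have "a * (t i * s (j - int n)) = b * t (i - int n) * s (j - int n)" using rt[OF ij(1,2)] by (simp add: algebra_simps)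
  also have "\<dots> = t (i - int n) * (b * s (j - int n))" by simp
  also have "\<dots> = a * (t (i - int n) * s j)" using rs[OF ij(3,4)] by simp
  finally show ?thesis using False by simp
next
  case True
  then have b: "b \<noteq> 0" using ab by simp
  have "b * (t i * s (j - int n)) = t i * (a * s j)" using rs[OF ij(3,4)] by (simp add: algebra_simps)
  also have "\<dots> = (a * t i) * s j" by simp
  also have "\<dots> = b * (t (i - int n) * s j)" using rt[OF ij(1,2)] by simp
  finally show ?thesis using b by simp
qed


lemma F_mult:
  assumes ab: "\<And>c. c < d \<Longrightarrow> a c \<noteq> 0 \<or> b c \<noteq> 0"
    and MF: "M \<in> F_set n d (diag_alg d) (dg d a) (dg d b)"
    and NF: "N \<in> F_set n d (diag_alg d) (dg d a) (dg d b)"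
  shows "M * N \<in> F_set n d (diag_alg d) (dg d a) (dg d b)"
proof -
  obtain T where T: "block_toeplitz_with n d T M"
    and TD: "\<And>j. - (int n - 1) \<le> j \<Longrightarrow> j \<le> int n - 1 \<Longrightarrow> T j \<in> diag_alg d"
    and TR: "\<And>j. 1 \<le> j \<Longrightarrow> j \<le> int n - 1 \<Longrightarrow> dg d a * T j = dg d b * T (j - int n)"
    using MF unfolding F_set_def by blast
  obtain S where S: "block_toeplitz_with n d S N"
    and SD: "\<And>j. - (int n - 1) \<le> j \<Longrightarrow> j \<le> int n - 1 \<Longrightarrow> S j \<in> diag_alg d"
    and SR: "\<And>j. 1 \<le> j \<Longrightarrow> j \<le> int n - 1 \<Longrightarrow> dg d a * S j = dg d b * S (j - int n)"
    using NF unfolding F_set_def by blast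
  have rt: "a c * T j $$ (c,c) = b c * T (j - int n) $$ (c,c)"
    if "c < d" "1 \<le> j" "j \<le> int n - 1" for c j
    using TR[OF that(2,3)] rel_iff[OF TD TD, of j "j - int n" a b] that by auto
  have rs: "a c * S j $$ (c,c) = b c * S (j - int n) $$ (c,c)"
    if "c < d" "1 \<le> j" "j \<le> int n - 1" for c j
    using SR[OF that(2,3)] rel_iff[OF SD SD, of j "j - int n" a b] that by auto
  define h where "h c p q = (\<Sum>r<n. T (int p - int r) $$ (c,c) * S (int r - int q) $$ (c,c))" for c p q
  have sh: "h c (p+1) (q+1) = h c p q" if "c < d" "p+1<n" "q+1<n" for c p q
    unfolding h_def
  proof (rule h_shift[where t="\<lambda>x. T x $$ (c,c)" and s="\<lambda>x. S x $$ (c,c)"])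
    fix i j :: int assume ij: "1\<le>i" "i \<le> int n - 1" "1 \<le> j" "j \<le> int n - 1"
    show "T i $$ (c,c) * S (j - int n) $$ (c,c) = T (i - int n) $$ (c,c) * S j $$ (c,c)"
      by (rule cond_from_ab[where a="a c" and b="b c" and n=n]) (use ab that rt rs ij in auto)
  qed (use that in auto)
  have hh: "h c p q = (if q \<le> p then h c (p-q) 0 else h c 0 (q-p))" if "c<d" "p<n" "q<n" for c p q
    using shift_inv[where h="h c" and n=n, OF sh[OF that(1)]] that by blast
  define H where "H c j = (if 0 \<le> j then h c (nat j) 0 else h c 0 (nat (-j)))" for c j
  define R where "R j = mat d d (\<lambda>(x,y). if x = y then H x j else 0)" for j
  have RD: "R j \<in> diag_alg d" for j unfolding R_def diag_alg_def diagonal_mat_def by auto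
  have Mc: "M \<in> carrier_mat (n*d) (n*d)" "N \<in> carrier_mat (n*d) (n*d)"
    using T S unfolding block_toeplitz_with_def by auto
  have btw: "block_toeplitz_with n d R (M * N)"
    unfolding block_toeplitz_with_def
  proof (intro conjI allI impI)
    show "M * N \<in> carrier_mat (n * d) (n * d)" using Mc by auto
    fix j show "R j \<in> carrier_mat d d" unfolding R_def by auto
  next
    fix i k assume ik: "i < n*d" "k < n*d"
    define p c q c' where "p = i div d" "c = i mod d" "q = k div d" "c' = k mod d"
    have pc: "p < n" "q < n" "c < d" "c' < d"
      using ik less_mult_imp_div_less mod_lt unfolding p_c_q_c'_def by auto
    have ie: "i = p*d + c" "k = q*d + c'" unfolding p_c_q_c'_def by auto
    have "(M*N) $$ (i,k) = (if c = c' then h c p q else 0)"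
      unfolding ie h_def by (rule prod_entry[OF T S TD SD pc])
    also have "\<dots> = R (int p - int q) $$ (c, c')"
      using pc hh[OF pc(3,1,2)] unfolding R_def H_def by (auto simp: nat_diff_distrib)
    finally show "(M * N) $$ (i, k) = R (int (i div d) - int (k div d)) $$ (i mod d, k mod d)"
      unfolding p_c_q_c'_def .
  qed
  have RR: "dg d a * R j = dg d b * R (j - int n)" if j: "1 \<le> j" "j \<le> int n - 1" for j
    unfolding rel_iff[OF RD RD]
  proof (intro allI impI)
    fix c assume c: "c < d"
    have e1: "R j $$ (c,c) = h c (nat j) 0" "R (j - int n) $$ (c,c) = h c 0 (nat (int n - j))"
      using c j unfolding R_def H_def by auto
    have "a c * (\<Sum>k<n. T (int (nat j) - int k) $$ (c,c) * S (int k) $$ (c,c))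
       = b c * (\<Sum>k<n. T (- int k) $$ (c,c) * S (int k + int (nat j) - int n) $$ (c,c))"
      by (rule pairing[where t="\<lambda>x. T x $$ (c,c)" and s="\<lambda>x. S x $$ (c,c)"])
         (use rt rs c j in auto)
    moreover have "int (nat j) = j" "int (nat (int n - j)) = int n - j" using j by auto
    moreover have "h c (nat j) 0 = (\<Sum>k<n. T (int (nat j) - int k) $$ (c,c) * S (int k) $$ (c,c))"
      unfolding h_def by simp
    moreover have "h c 0 (nat (int n - j)) = (\<Sum>k<n. T (- int k) $$ (c,c) * S (int k + int (nat j) - int n) $$ (c,c))"
      unfolding h_def using j
      by (intro sum.cong) (simp_all add: algebra_simps)
    ultimately show "a c * R j $$ (c,c) = b c * R (j - int n) $$ (c,c)"
      unfolding e1 by metis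
  qed
  show ?thesis unfolding F_set_def using btw RD RR by blast
qed


theorem corollary5p3:
  fixes n d :: nat and \<A> :: "complex mat set"
  assumes "n \<ge> 2" and "d \<ge> 1"
    and "maximal_algebra_in (n*d) (toeplitz_set n d (diag_alg d)) \<A>"
  shows "\<exists>A\<in>diag_alg d. \<exists>B\<in>diag_alg d. \<A> = F_set n d (diag_alg d) A B"
proof -
  let ?TS = "toeplitz_set n d (diag_alg d)"
  have alg: "algebra_in (n*d) ?TS \<A>" and nomax: "\<not> (\<exists>\<B>. algebra_in (n*d) ?TS \<B> \<and> \<A> \<subset> \<B>)"
    using assms(3) unfolding maximal_algebra_in_def by auto
  have memT: "\<exists>T. block_toeplitz_with n d T M \<and> (\<forall>j. - (int n - 1) \<le> j \<and> j \<le> int n - 1 \<longrightarrow> T j \<in> diag_alg d)"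
    if "M \<in> \<A>" for M
    using alg that unfolding algebra_in_def toeplitz_set_def by blast
  have cond: "ent d M i c * ent d N (j - int n) c = ent d M (i - int n) c * ent d N j c"
    if MN: "M \<in> \<A>" "N \<in> \<A>" and c: "c < d" and ij: "1\<le>i" "i \<le> int n - 1" "1 \<le> j" "j \<le> int n - 1"
    for M N c i j
  proof -
    obtain T where T: "block_toeplitz_with n d T M" and TD: "\<And>j. - (int n - 1) \<le> j \<Longrightarrow> j \<le> int n - 1 \<Longrightarrow> T j \<in> diag_alg d"
      using memT[OF MN(1)] by blast
    obtain S where S: "block_toeplitz_with n d S N" and SD: "\<And>j. - (int n - 1) \<le> j \<Longrightarrow> j \<le> int n - 1 \<Longrightarrow> S j \<in> diag_alg d"
      using memT[OF MN(2)] by blast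
    have "M * N \<in> \<A>" using alg MN unfolding algebra_in_def by blast
    then obtain R where R: "block_toeplitz_with n d R (M*N)" using memT by blast
    have "T i $$ (c,c) * S (j - int n) $$ (c,c) = T (i - int n) $$ (c,c) * S j $$ (c,c)"
    proof (rule cond_from_shift[where t="\<lambda>x. T x $$ (c,c)" and s="\<lambda>x. S x $$ (c,c)" and n=n, OF _ ij])
      fix p q assume pq: "p+1<n" "q+1<n"
      have "(M*N) $$ ((p+1)*d+c, (q+1)*d+c) = R (int (p+1) - int (q+1)) $$ (c,c)"
        using btw_entry[OF R, of "p+1" "q+1" c c] pq c by simp
      also have "\<dots> = R (int p - int q) $$ (c,c)" by simp
      also have "\<dots> = (M*N) $$ (p*d+c, q*d+c)"
        using btw_entry[OF R, of p q c c] pq c by simp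
      finally have "(M*N) $$ ((p+1)*d+c, (q+1)*d+c) = (M*N) $$ (p*d+c, q*d+c)" .
      then show "(\<Sum>r<n. T (int (p+1) - int r) $$ (c,c) * S (int r - int (q+1)) $$ (c,c))
          = (\<Sum>r<n. T (int p - int r) $$ (c,c) * S (int r - int q) $$ (c,c))"
        using prod_entry[OF T S TD SD, of "p+1" "q+1" c c] prod_entry[OF T S TD SD, of p q c c] pq c
        by simp
    qed
    then show ?thesis using ent_eq[OF T] ent_eq[OF S] ij c by simp
  qed
  have "\<forall>c. \<exists>a b. c < d \<longrightarrow> (a \<noteq> 0 \<or> b \<noteq> 0) \<and>
     (\<forall>M\<in>\<A>. \<forall>i\<in>{1..int n - 1}. a * ent d M i c = b * ent d M (i - int n) c)"
  proof (intro allI)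
    fix c
    show "\<exists>a b. c < d \<longrightarrow> (a \<noteq> 0 \<or> b \<noteq> 0) \<and>
     (\<forall>M\<in>\<A>. \<forall>i\<in>{1..int n - 1}. a * ent d M i c = b * ent d M (i - int n) c)"
    proof (cases "c < d")
      case True
      have "\<exists>a b. (a \<noteq> 0 \<or> b \<noteq> 0) \<and>
        (\<forall>M\<in>\<A>. \<forall>i\<in>{1..int n - 1}. a * (\<lambda>M i. ent d M i c) M i = b * (\<lambda>M i. ent d M (i - int n) c) M i)"
        by (rule choose_ab) (use cond True in auto)
      then show ?thesis by auto
    qed auto
  qed
  then obtain a where "\<forall>c. \<exists>b. c < d \<longrightarrow> (a c \<noteq> 0 \<or> b \<noteq> 0) \<and>
     (\<forall>M\<in>\<A>. \<forall>i\<in>{1..int n - 1}. a c * ent d M i c = b * ent d M (i - int n) c)"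
    by (metis choice)
  then obtain b where ab: "\<And>c. c < d \<Longrightarrow> (a c \<noteq> 0 \<or> b c \<noteq> 0) \<and>
     (\<forall>M\<in>\<A>. \<forall>i\<in>{1..int n - 1}. a c * ent d M i c = b c * ent d M (i - int n) c)"
    by (metis choice)
  let ?F = "F_set n d (diag_alg d) (dg d a) (dg d b)"
  have sub: "\<A> \<subseteq> ?F"
  proof
    fix M assume M: "M \<in> \<A>"
    obtain T where T: "block_toeplitz_with n d T M" and TD: "\<And>j. - (int n - 1) \<le> j \<Longrightarrow> j \<le> int n - 1 \<Longrightarrow> T j \<in> diag_alg d"
      using memT[OF M] by blast
    have "dg d a * T j = dg d b * T (j - int n)" if j: "1 \<le> j" "j \<le> int n - 1" for j
    proof -
      have d: "T j \<in> diag_alg d" "T (j - int n) \<in> diag_alg d" using TD j by auto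
      show ?thesis unfolding rel_iff[OF d]
      proof (intro allI impI)
        fix c assume c: "c < d"
        have "a c * ent d M j c = b c * ent d M (j - int n) c" using ab[OF c] M j by auto
        then show "a c * T j $$ (c, c) = b c * T (j - int n) $$ (c, c)" using ent_eq[OF T] j c by simp
      qed
    qed
    then show "M \<in> ?F" unfolding F_set_def using T TD by blast
  qed
  have Falg: "algebra_in (n*d) ?TS ?F"
    unfolding algebra_in_def
  proof (intro conjI ballI allI)
    show "?F \<subseteq> ?TS" unfolding F_set_def toeplitz_set_def by blast
    show "?F \<subseteq> carrier_mat (n*d) (n*d)" unfolding F_set_def block_toeplitz_with_def by blast
    have "dg d a * 0\<^sub>m d d = dg d b * 0\<^sub>m d d"
      unfolding rel_iff[OF diag_zero_mat diag_zero_mat] by simp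
    then show "0\<^sub>m (n*d) (n*d) \<in> ?F" unfolding F_set_def using btw_zero diag_zero_mat by blast
  next
    fix X Y assume X: "X \<in> ?F" and Y: "Y \<in> ?F"
    show "X * Y \<in> ?F" using F_mult[OF _ X Y] ab by blast
    obtain T where T: "block_toeplitz_with n d T X"
      and TD: "\<And>j. - (int n - 1) \<le> j \<Longrightarrow> j \<le> int n - 1 \<Longrightarrow> T j \<in> diag_alg d"
      and TR: "\<And>j. 1 \<le> j \<Longrightarrow> j \<le> int n - 1 \<Longrightarrow> dg d a * T j = dg d b * T (j - int n)"
      using X unfolding F_set_def by blast
    obtain S where S: "block_toeplitz_with n d S Y"
      and SD: "\<And>j. - (int n - 1) \<le> j \<Longrightarrow> j \<le> int n - 1 \<Longrightarrow> S j \<in> diag_alg d"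
      and SR: "\<And>j. 1 \<le> j \<Longrightarrow> j \<le> int n - 1 \<Longrightarrow> dg d a * S j = dg d b * S (j - int n)"
      using Y unfolding F_set_def by blast
    have "dg d a * (T j + S j) = dg d b * (T (j - int n) + S (j - int n))" if j: "1 \<le> j" "j \<le> int n - 1" for j
    proof -
      have d: "T j \<in> diag_alg d" "S j \<in> diag_alg d" "T (j - int n) \<in> diag_alg d" "S (j - int n) \<in> diag_alg d"
        using TD SD j by auto
      have "\<forall>c<d. a c * T j $$ (c,c) = b c * T (j - int n) $$ (c,c)" "\<forall>c<d. a c * S j $$ (c,c) = b c * S (j - int n) $$ (c,c)"
        using TR[OF j] SR[OF j] rel_iff[OF d(1,3)] rel_iff[OF d(2,4)] by auto
      moreover have "T j \<in> carrier_mat d d" "S j \<in> carrier_mat d d" "T (j - int n) \<in> carrier_mat d d" "S (j - int n) \<in> carrier_mat d d"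
        using d unfolding diag_alg_def by auto
      ultimately show ?thesis
        unfolding rel_iff[OF diag_add[OF d(1,2)] diag_add[OF d(3,4)]] by (auto simp: algebra_simps)
    qed
    then show "X + Y \<in> ?F" unfolding F_set_def using btw_add[OF T S] TD SD diag_add by blast
  next
    fix x :: complex and X assume X: "X \<in> ?F"
    obtain T where T: "block_toeplitz_with n d T X"
      and TD: "\<And>j. - (int n - 1) \<le> j \<Longrightarrow> j \<le> int n - 1 \<Longrightarrow> T j \<in> diag_alg d"
      and TR: "\<And>j. 1 \<le> j \<Longrightarrow> j \<le> int n - 1 \<Longrightarrow> dg d a * T j = dg d b * T (j - int n)"
      using X unfolding F_set_def by blast
    have "dg d a * (x \<cdot>\<^sub>m T j) = dg d b * (x \<cdot>\<^sub>m T (j - int n))" if j: "1 \<le> j" "j \<le> int n - 1" for j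
    proof -
      have d: "T j \<in> diag_alg d" "T (j - int n) \<in> diag_alg d" using TD j by auto
      have "\<forall>c<d. a c * T j $$ (c,c) = b c * T (j - int n) $$ (c,c)"
        using TR[OF j] rel_iff[OF d(1,2)] by auto
      moreover have "T j \<in> carrier_mat d d" "T (j - int n) \<in> carrier_mat d d"
        using d unfolding diag_alg_def by auto
      ultimately show ?thesis
        unfolding rel_iff[OF diag_smult[OF d(1)] diag_smult[OF d(2)]] by (auto simp: algebra_simps)
    qed
    then show "x \<cdot>\<^sub>m X \<in> ?F" unfolding F_set_def using btw_smult[OF T] TD diag_smult by blast
  qed
  have "\<A> = ?F" using sub Falg nomax by blast
  then show ?thesis using dg_diag by blast
qed

end
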